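(* There is no line $\ell$ of $\mathrm{PG}(3,q)$ with plane orbit distribution $OD_2(\ell)=[1,0,0,d_2,e_2]$ with $d_2\ge 1$.
   Context: Let $q$ be a power of a prime $p\neq 2,3$. In $\mathrm{PG}(3,q)$ with coordinates $(Y_0,\dots,Y_3)$, the twisted cubic is $\mathcal{C}=\{(1,t,t^2,t^3):t\in\mathbb{F}_q\}\cup\{(0,0,0,1)\}$. Osculating planes: $\Pi(t):-t^3Y_0+3t^2Y_1-3tY_2+Y_3=0$ ($t\in\mathbb{F}_q$), $\Pi(\infty):Y_0=0$. Plane classes: $\mathcal{H}_1$ = osculating planes; $\mathcal{H}_2$ = planes meeting $\mathcal{C}$ in exactly two points; $\mathcal{H}_3$ = planes meeting $\mathcal{C}$ in exactly three points; $\mathcal{H}_4$ = non-osculating planes meeting $\mathcal{C}$ in exactly one point; $\mathcal{H}_5$ = planes disjoint from $\mathcal{C}$. $OD_2(\ell)=[a_2,b_2,c_2,d_2,e_2]$ lists the numbers of planes through $\ell$ in $\mathcal{H}_1,\dots,\mathcal{H}_5$ respectively. *)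

theory Defs
  imports "HOL-Computational_Algebra.Primes"
begin

text \<open>Homogeneous coordinates (Y0,Y1,Y2,Y3) of PG(3,q); a plane is given by a nonzero
coefficient vector c, the plane being c0 Y0 + c1 Y1 + c2 Y2 + c3 Y3 = 0.\<close>

type_synonym 'a pt = "'a \<times> 'a \<times> 'a \<times> 'a"

definition pdot :: "'a::comm_ring pt \<Rightarrow> 'a pt \<Rightarrow> 'a" where
  "pdot c y = (case c of (c0,c1,c2,c3) \<Rightarrow> case y of (y0,y1,y2,y3) \<Rightarrow>
      c0*y0 + c1*y1 + c2*y2 + c3*y3)"

definition smul_pt :: "'a::times \<Rightarrow> 'a pt \<Rightarrow> 'a pt" where
  "smul_pt l x = (case x of (x0,x1,x2,x3) \<Rightarrow> (l*x0, l*x1, l*x2, l*x3))"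

definition proj_class :: "'a::field pt \<Rightarrow> 'a pt set" where
  "proj_class x = {smul_pt l x | l. l \<noteq> 0}"

text \<open>Twisted cubic, one normalized representative per point (pairwise non-proportional).\<close>
definition twisted_cubic :: "'a::field pt set" where
  "twisted_cubic = {(1, t, t^2, t^3) | t. True} \<union> {(0,0,0,1)}"

definition osc_plane :: "'a::field \<Rightarrow> 'a pt" where
  "osc_plane t = (-(t^3), 3*t^2, -(3*t), 1)"

definition is_osculating :: "'a::field pt \<Rightarrow> bool" where
  "is_osculating c \<longleftrightarrow>
     (\<exists>t. proj_class c = proj_class (osc_plane t)) \<or> proj_class c = proj_class (1,0,0,0)"

definition meet_count :: "'a::field pt \<Rightarrow> nat" where
  "meet_count c = card {P \<in> twisted_cubic. pdot c P = 0}"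

definition plane_class :: "nat \<Rightarrow> 'a::field pt \<Rightarrow> bool" where
  "plane_class i c =
     (if i = 1 then is_osculating c
      else if i = 2 then meet_count c = 2
      else if i = 3 then meet_count c = 3
      else if i = 4 then \<not> is_osculating c \<and> meet_count c = 1
      else if i = 5 then meet_count c = 0
      else False)"

definition is_line :: "'a::field pt \<Rightarrow> 'a pt \<Rightarrow> bool" where
  "is_line u v \<longleftrightarrow> u \<noteq> (0,0,0,0) \<and> (\<forall>l. v \<noteq> smul_pt l u)"

definition planes_through_line :: "'a::field pt \<Rightarrow> 'a pt \<Rightarrow> nat \<Rightarrow> 'a pt set set" where
  "planes_through_line u v i =
     {proj_class c | c. c \<noteq> (0,0,0,0) \<and> pdot c u = 0 \<and> pdot c v = 0 \<and> plane_class i c}"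

definition OD2 :: "'a::field pt \<Rightarrow> 'a pt \<Rightarrow> nat list" where
  "OD2 u v = map (\<lambda>i. card (planes_through_line u v i)) [1,2,3,4,5]"

end

theory Submission
  imports Defs "HOL-Number_Theory.Residues" "HOL-Computational_Algebra.Polynomial"
begin


lemma char_facts:
  fixes p n :: nat
  assumes "prime p" and "p \<noteq> 2" and "p \<noteq> 3" and "card (UNIV :: ('a::{field,finite}) set) = p ^ n"
  shows "(2::'a) \<noteq> 0" "(3::'a) \<noteq> 0" "odd (card (UNIV::'a set))" "card (UNIV::'a set) \<ge> 5"
proof -
  have cp: "prime CHAR('a)"
    using prime_CHAR_semidom[where ?'a='a] finite_imp_CHAR_pos[where ?'a='a] by auto
  have "CHAR('a) dvd p ^ n" using CHAR_dvd_CARD[where ?'a='a] assms(4) by simp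
  hence "CHAR('a) dvd p" using cp prime_dvd_power by blast
  hence cheq: "CHAR('a) = p" using cp assms(1) by (simp add: primes_dvd_imp_eq)
  show "(2::'a) \<noteq> 0"
  proof
    assume "(2::'a) = 0"
    hence "of_nat 2 = (0::'a)" by simp
    hence "p dvd 2" using of_nat_eq_0_iff_char_dvd cheq by metis
    thus False using assms(1,2) by (metis primes_dvd_imp_eq two_is_prime_nat)
  qed
  show "(3::'a) \<noteq> 0"
  proof
    assume "(3::'a) = 0"
    hence "of_nat 3 = (0::'a)" by simp
    hence "p dvd 3" using of_nat_eq_0_iff_char_dvd cheq by metis
    moreover have "prime (3::nat)" by simp
    ultimately show False using assms(1,3) by (metis primes_dvd_imp_eq)
  qed
  have p5: "p \<ge> 5"
  proof -
    have "p \<ge> 2" using assms(1) prime_ge_2_nat by blast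
    moreover have "p \<noteq> 4"
    proof
      assume "p = 4"
      hence "(2::nat) dvd p" by simp
      hence "2 = p" using assms(1) primes_dvd_imp_eq two_is_prime_nat by blast
      thus False using \<open>p = 4\<close> by simp
    qed
    ultimately show ?thesis using assms(2,3) by linarith
  qed
  have c2: "card (UNIV::'a set) \<ge> 2"
  proof -
    have "{0::'a, 1} \<subseteq> UNIV" by simp
    hence "card {0::'a,1} \<le> card (UNIV::'a set)" by (intro card_mono) auto
    thus ?thesis by simp
  qed
  hence "n \<noteq> 0" using assms(4) by (metis power_0 numeral_le_one_iff semiring_norm(69))
  hence "p ^ n \<ge> p" using p5 by (simp add: self_le_power)
  thus "card (UNIV::'a set) \<ge> 5" using p5 assms(4) by linarith
  have "odd p" using assms(1) prime_odd_nat p5 by simp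
  thus "odd (card (UNIV::'a set))" using assms(4) by simp
qed



lemma sq_card:
  assumes "odd (card (UNIV::('a::{field,finite}) set))"
  shows "card (UNIV::'a set) < 2 * card (range (\<lambda>b::'a. b^2))"
proof -
  let ?S = "range (\<lambda>b::'a. b^2)"
  define g where "g x = (x^2, x = (SOME r. r^2 = x^2))" for x :: 'a
  have "inj g"
  proof (rule injI)
    fix x y assume "g x = g y"
    hence sq: "x^2 = y^2" and fl: "(x = (SOME r. r^2 = x^2)) = (y = (SOME r. r^2 = y^2))"
      unfolding g_def by auto
    define s where "s = (SOME r. r^2 = x^2)"
    have s2: "s^2 = x^2" unfolding s_def by (rule someI[of _ x]) simp
    have fl': "(x = s) = (y = s)" using fl sq unfolding s_def by simp
    show "x = y"
    proof (cases "x = s")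
      case True then show ?thesis using fl' by simp
    next
      case False
      hence "y \<noteq> s" using fl' by simp
      have "x = -s" using s2 False by (metis power2_eq_iff)
      moreover have "y = -s" using s2 sq \<open>y \<noteq> s\<close> by (metis power2_eq_iff)
      ultimately show ?thesis by simp
    qed
  qed
  have "card (UNIV::'a set) \<le> card (?S \<times> (UNIV::bool set))"
  proof (rule card_inj_on_le)
    show "inj_on g UNIV" using \<open>inj g\<close> .
    show "g ` UNIV \<subseteq> ?S \<times> UNIV" unfolding g_def by auto
  qed simp
  also have "\<dots> = 2 * card ?S" by (simp add: card_cartesian_product)
  finally have "card (UNIV::'a set) \<le> 2 * card ?S" .
  moreover have "card (UNIV::'a set) \<noteq> 2 * card ?S" using assms by auto
  ultimately show ?thesis by linarith
qed

lemma sq_meet: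
  assumes "odd (card (UNIV::('a::{field,finite}) set))" and "(k::'a) \<noteq> 0"
  shows "\<exists>b z. b^2 = e - k * z^2"
proof (rule ccontr)
  assume nex: "\<not> ?thesis"
  let ?S = "range (\<lambda>b::'a. b^2)"
  let ?T = "(\<lambda>y. e - k * y) ` ?S"
  have "inj_on (\<lambda>y. e - k * y) ?S" using assms(2) by (auto simp: inj_on_def)
  hence cT: "card ?T = card ?S" by (rule card_image)
  have "?S \<inter> ?T = {}" using nex by auto
  hence "card (?S \<union> ?T) = card ?S + card ?T" by (intro card_Un_disjoint) auto
  moreover have "card (?S \<union> ?T) \<le> card (UNIV::'a set)" by (intro card_mono) auto
  ultimately show False using sq_card[OF assms(1)] cT by linarith
qed

lemma conic_pt:
  assumes "odd (card (UNIV::('a::{field,finite}) set))" and "card (UNIV::'a set) \<ge> 5"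
    and "(2::'a) \<noteq> 0" and "(3::'a) \<noteq> 0" and "e \<noteq> 0"
  shows "\<exists>b z::'a. b \<noteq> 0 \<and> b^2 + 3 * z^2 = e"
proof -
  obtain b z :: 'a where bz: "b^2 = e - 3 * z^2" using sq_meet[OF assms(1) assms(4)] by blast
  show ?thesis
  proof (cases "b = 0")
    case False then show ?thesis using bz by (intro exI[of _ b] exI[of _ z]) auto
  next
    case True
    hence ez: "e = 3 * z^2" using bz by simp
    hence z0: "z \<noteq> 0" using assms(5) by auto
    have "\<exists>m::'a. m \<noteq> 0 \<and> m^2 + 3 \<noteq> 0"
    proof (rule ccontr)
      assume "\<not> ?thesis"
      hence all: "\<forall>m::'a. m = 0 \<or> m^2 = -3" by (metis eq_neg_iff_add_eq_0)
      obtain m1 :: 'a where "m1 \<noteq> 0" "m1^2 = -3"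
      proof -
        have "card (UNIV::'a set) \<ge> 2" using assms(2) by linarith
        have "\<exists>m::'a. m \<noteq> 0" using zero_neq_one by metis
        then show ?thesis using all that by blast
      qed
      have "UNIV \<subseteq> {0, m1, -m1::'a}"
      proof
        fix m :: 'a
        have "m = 0 \<or> m^2 = m1^2" using all \<open>m1^2 = -3\<close> by auto
        thus "m \<in> {0, m1, -m1}" by (auto simp: power2_eq_iff)
      qed
      hence "card (UNIV::'a set) \<le> card {0, m1, -m1::'a}" by (intro card_mono) auto
      also have "\<dots> \<le> 3" by (auto simp: card_insert_if)
      finally show False using assms(2) by linarith
    qed
    then obtain m :: 'a where m: "m \<noteq> 0" "m^2 + 3 \<noteq> 0" by blast
    define b' where "b' = 6 * m * z / (m^2 + 3)"
    define z' where "z' = z * (m^2 - 3) / (m^2 + 3)"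
    have "(6::'a) = 2 * 3" by simp
    hence "(6::'a) \<noteq> 0" using assms(3,4) by (metis no_zero_divisors)
    hence "b' \<noteq> 0" using m z0 unfolding b'_def by simp
    moreover have "b'^2 + 3 * z'^2 = e"
    proof -
      have D: "(m^2 + 3)^2 \<noteq> 0" using m by simp
      have "b'^2 + 3 * z'^2 = ((6 * m * z)^2 + 3 * (z * (m^2 - 3))^2) / (m^2 + 3)^2"
        unfolding b'_def z'_def by (simp add: power_divide add_divide_distrib)
      also have "(6 * m * z)^2 + 3 * (z * (m^2 - 3))^2 = (3 * z^2) * (m^2 + 3)^2" by (simp add: power2_eq_square algebra_simps)
      finally show ?thesis using D ez by simp
    qed
    ultimately show ?thesis by blast
  qed
qed



lemma cubic_pp:
  assumes "odd (card (UNIV::('a::{field,finite}) set))" and "card (UNIV::'a set) \<ge> 5"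
    and "(2::'a) \<noteq> 0" and "(3::'a) \<noteq> 0" and A: "A \<noteq> 0"
    and inj: "\<And>x y. A*x^3+B*x^2+C*x = A*y^3+B*y^2+C*(y::'a) \<Longrightarrow> x = y"
  shows "B^2 = 3*A*C"
proof (rule ccontr)
  assume ne: "B^2 \<noteq> 3*A*C"
  define s where "s = B/(3*A)"
  define c where "c = C/A"
  have sB: "B = 3*A*s" unfolding s_def using A assms(4) by simp
  have cC: "C = A*c" unfolding c_def using A by simp
  define e where "e = 3*s^2 - c"
  have "e \<noteq> 0"
  proof
    assume "e = 0"
    hence "c = 3*s^2" unfolding e_def by simp
    hence "B^2 = 3*A*C" unfolding sB cC by (simp add: algebra_simps power2_eq_square)
    thus False using ne by simp
  qed
  then obtain b z where bz: "b \<noteq> 0" "b^2 + 3*z^2 = e" using conic_pt[OF assms(1-4)] by blast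
  define a where "a = z - s"
  define x where "x = a + b"
  define y where "y = a - b"
  have "x \<noteq> y" using bz(1) assms(3) unfolding x_def y_def by (auto simp: algebra_simps)
  have fac: "A*(x^2+x*y+y^2) + B*(x+y) + C = 0"
  proof -
    have "A*(x^2+x*y+y^2) + B*(x+y) + C = A*((b^2 + 3*z^2) - 3*s^2 + c)"
      unfolding x_def y_def a_def sB cC
      by (simp add: algebra_simps power2_eq_square)
    also have "\<dots> = 0" unfolding bz(2) e_def by simp
    finally show ?thesis .
  qed
  have "(A*x^3+B*x^2+C*x) - (A*y^3+B*y^2+C*y) = (x - y) * (A*(x^2+x*y+y^2) + B*(x+y) + C)"
    by (simp add: algebra_simps power2_eq_square power3_eq_cube)
  hence "A*x^3+B*x^2+C*x = A*y^3+B*y^2+C*y" using fac by simp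
  thus False using inj \<open>x \<noteq> y\<close> by blast
qed



lemma smul_smul: "smul_pt l (smul_pt k x) = smul_pt (l*k) (x::'a::field pt)"
  by (cases x) (simp add: smul_pt_def mult.assoc)

lemma proj_class_smul: "k \<noteq> 0 \<Longrightarrow> proj_class (smul_pt k x) = proj_class (x::'a::field pt)"
proof -
  assume k: "k \<noteq> 0"
  show ?thesis unfolding proj_class_def
  proof (intro equalityI subsetI)
    fix y assume "y \<in> {smul_pt l (smul_pt k x) |l. l \<noteq> 0}"
    then obtain l where "l \<noteq> 0" "y = smul_pt (l*k) x" by (auto simp: smul_smul)
    thus "y \<in> {smul_pt l x |l. l \<noteq> 0}" using k by auto
  next
    fix y assume "y \<in> {smul_pt l x |l. l \<noteq> 0}"
    then obtain l where l: "l \<noteq> 0" "y = smul_pt l x" by auto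
    hence "y = smul_pt (l/k) (smul_pt k x)" using k by (simp add: smul_smul)
    thus "y \<in> {smul_pt l (smul_pt k x) |l. l \<noteq> 0}" using k l by auto
  qed
qed

lemma osc_smul: "k \<noteq> 0 \<Longrightarrow> is_osculating (smul_pt k (osc_plane t))"
  unfolding is_osculating_def using proj_class_smul by blast

lemma inf_smul: "k \<noteq> 0 \<Longrightarrow> is_osculating (smul_pt k ((1,0,0,0)::'a::field pt))"
  unfolding is_osculating_def using proj_class_smul by blast

lemma affine_in: "(1, t, t^2, t^3) \<in> twisted_cubic"
  unfolding twisted_cubic_def by auto

lemma inf_in: "(0, 0, 0, 1) \<in> twisted_cubic"
  unfolding twisted_cubic_def by auto

lemma core_inf:
  fixes w0 w1 w2 w3 :: "'a::{field,finite}"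
  assumes "odd (card (UNIV::'a set))" and "card (UNIV::'a set) \<ge> 5"
    and "(2::'a) \<noteq> 0" and "(3::'a) \<noteq> 0"
    and F1: "\<And>a P Q. P \<noteq> Q \<Longrightarrow> P \<in> twisted_cubic \<Longrightarrow> Q \<in> twisted_cubic
        \<Longrightarrow> pdot (w0 - a, w1, w2, w3) P = 0 \<Longrightarrow> pdot (w0 - a, w1, w2, w3) Q = 0 \<Longrightarrow> False"
    and F2: "\<And>a. is_osculating (w0 - a, w1, w2, w3) \<Longrightarrow> False"
  shows False
proof (cases "w3 = 0")
  case True
  show False
    by (rule F1[of "(1,0,0,0)" "(0,0,0,1)" w0])
       (use True affine_in[of 0] inf_in in \<open>auto simp: pdot_def\<close>)
next
  case False
  have inj: "x = y" if h: "w3*x^3+w2*x^2+w1*x = w3*y^3+w2*y^2+w1*y" for x y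
  proof (rule ccontr)
    assume "x \<noteq> y"
    show False
    proof (rule F1[of "(1,x,x^2,x^3)" "(1,y,y^2,y^3)" "w0 + (w3*x^3+w2*x^2+w1*x)"])
      show "(1,x,x^2,x^3) \<noteq> (1,y,y^2,y^3)" using \<open>x \<noteq> y\<close> by simp
      show "pdot (w0 - (w0 + (w3*x^3+w2*x^2+w1*x)), w1, w2, w3) (1,x,x^2,x^3) = 0"
        by (simp add: pdot_def algebra_simps)
      show "pdot (w0 - (w0 + (w3*x^3+w2*x^2+w1*x)), w1, w2, w3) (1,y,y^2,y^3) = 0"
        using h by (simp add: pdot_def algebra_simps)
    qed (rule affine_in)+
  qed
  have rel: "w2^2 = 3*w3*w1" by (rule cubic_pp[OF assms(1-4) False inj])
  define k where "k = w2/(3*w3)"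
  have w2: "w2 = 3*w3*k" unfolding k_def using False assms(4) by simp
  have w1: "w1 = 3*w3*k^2"
  proof -
    have "3*w3*(3*w3*k^2) = (3*w3*k)^2" by (simp add: power2_eq_square)
    also have "\<dots> = 3*w3*w1" using rel w2 by simp
    finally have "3*w3*w1 = 3*w3*(3*w3*k^2)" by (rule sym)
    moreover have "3*w3 \<noteq> 0" using False assms(4) by simp
    ultimately show ?thesis using mult_left_cancel by blast
  qed
  have "(w0 - (w0 - w3*k^3), w1, w2, w3) = smul_pt w3 (osc_plane (-k))"
    unfolding osc_plane_def smul_pt_def w1 w2 by (simp add: algebra_simps power2_eq_square power3_eq_cube)
  thus False using F2 osc_smul[OF False] by metis
qed



lemma core_osc:
  fixes w0 w1 w2 w3 t0 :: "'a::{field,finite}" and M :: "'a \<Rightarrow> 'a pt"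
  assumes "odd (card (UNIV::'a set))" and "card (UNIV::'a set) \<ge> 5"
    and "(2::'a) \<noteq> 0" and "(3::'a) \<noteq> 0"
    and M_def: "\<And>a. M a = (w0 - a * - (t0^3), w1 - a*(3*t0^2), w2 - a * - (3*t0), w3 - a*1)"
    and F1: "\<And>a P Q. P \<noteq> Q \<Longrightarrow> P \<in> twisted_cubic \<Longrightarrow> Q \<in> twisted_cubic
        \<Longrightarrow> pdot (M a) P = 0 \<Longrightarrow> pdot (M a) Q = 0 \<Longrightarrow> False"
    and F2: "\<And>a. is_osculating (M a) \<Longrightarrow> False"
  shows False
proof -
  define f where "f t = w0 + w1*t + w2*t^2 + w3*t^3" for t
  define b0 where "b0 = f t0"
  define b1 where "b1 = w1 + 2*w2*t0 + 3*w3*t0^2"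
  define b2 where "b2 = w2 + 3*w3*t0"
  have paff: "pdot (M a) (1,t,t^2,t^3) = f t - a*(t-t0)^3" for a t
    unfolding M_def f_def pdot_def by (simp add: algebra_simps power2_eq_square power3_eq_cube)
  have pinf: "pdot (M a) (0,0,0,1) = w3 - a" for a
    unfolding M_def pdot_def by simp
  have tay: "f (t0 + s) = b0 + b1*s + b2*s^2 + w3*s^3" for s
    unfolding f_def b0_def b1_def b2_def by (simp add: algebra_simps power2_eq_square power3_eq_cube)
  show False
  proof (cases "b0 = 0")
    case True
    show False
      by (rule F1[of "(1,t0,t0^2,t0^3)" "(0,0,0,1)" w3])
         (use True affine_in inf_in paff pinf b0_def in auto)
  next
    case False
    define pt :: "'a \<Rightarrow> 'a pt" where "pt x = (if x = 0 then (0,0,0,1) else (1, t0+1/x, (t0+1/x)^2, (t0+1/x)^3))" for x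
    have pt_in: "pt x \<in> twisted_cubic" for x
      unfolding pt_def using affine_in inf_in by auto
    have pt_zero: "pdot (M a) (pt x) = 0" if "b0*x^3 + b1*x^2 + b2*x + w3 = a" for a x
    proof (cases "x = 0")
      case True then show ?thesis using that pinf unfolding pt_def by simp
    next
      case False
      have "pdot (M a) (pt x) = f (t0 + 1/x) - a*(1/x)^3"
        unfolding pt_def using False paff[of a "t0+1/x"] by simp
      also have "\<dots> = b0 + b1*(1/x) + b2*(1/x)^2 + (w3 - a)*(1/x)^3"
        unfolding tay by (simp add: algebra_simps)
      also have "\<dots> = (b0*x^3 + b1*x^2 + b2*x + w3 - a) / x^3"
        using False by (simp add: field_simps power2_eq_square power3_eq_cube)
      also have "\<dots> = 0" using that by simp
      finally show ?thesis .
    qed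
    have pt_inj: "pt x \<noteq> pt y" if "x \<noteq> y" for x y
      using that unfolding pt_def by (auto split: if_splits)
    have inj: "x = y" if h: "b0*x^3+b1*x^2+b2*x = b0*y^3+b1*y^2+b2*y" for x y
    proof (rule ccontr)
      assume "x \<noteq> y"
      show False
        by (rule F1[OF pt_inj[OF \<open>x \<noteq> y\<close>] pt_in pt_in, of "b0*x^3 + b1*x^2 + b2*x + w3"])
           (use h in \<open>auto intro!: pt_zero\<close>)
    qed
    have rel: "b1^2 = 3*b0*b2" by (rule cubic_pp[OF assms(1-4) False inj])
    define k where "k = b1/(3*b0)"
    have nz: "3*b0 \<noteq> 0" using False assms(4) by simp
    have e1: "b1 = 3*b0*k" unfolding k_def using nz by simp
    have e2: "b2 = 3*b0*k^2"
    proof -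
      have "3*b0*(3*b0*k^2) = (3*b0*k)^2" by (simp add: power2_eq_square)
      also have "\<dots> = 3*b0*b2" using rel e1 by simp
      finally have "3*b0*b2 = 3*b0*(3*b0*k^2)" by (rule sym)
      thus ?thesis using nz mult_left_cancel by blast
    qed
    have ew2: "w2 = 3*b0*k^2 - 3*w3*t0" using e2 unfolding b2_def by (simp add: algebra_simps)
    have ew1: "w1 = 3*b0*k - 2*w2*t0 - 3*w3*t0^2" using e1 unfolding b1_def by (simp add: algebra_simps)
    have ew0: "w0 = b0 - w1*t0 - w2*t0^2 - w3*t0^3" unfolding b0_def f_def by (simp add: algebra_simps)
    define a where "a = w3 - b0*k^3"
    show False
    proof (cases "k = 0")
      case True
      have "M a = smul_pt b0 (1,0,0,0)"
        unfolding M_def a_def smul_pt_def using True ew0 ew1 ew2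
        by (simp add: algebra_simps power2_eq_square power3_eq_cube)
      thus False using F2 inf_smul[OF False] by metis
    next
      case knz: False
      have "M a = smul_pt (b0*k^3) (osc_plane (t0 - 1/k))"
      proof -
        have c0: "w0 - a * - (t0^3) = b0*k^3 * (-((t0 - 1/k)^3))"
          unfolding a_def ew0 ew1 ew2 using knz
          by (simp add: field_simps power2_eq_square power3_eq_cube)
        have c1: "w1 - a*(3*t0^2) = b0*k^3 * (3*(t0 - 1/k)^2)"
          unfolding a_def ew1 ew2 using knz
          by (simp add: field_simps power2_eq_square power3_eq_cube)
        have c2: "w2 - a * - (3*t0) = b0*k^3 * (-(3*(t0 - 1/k)))"
          unfolding a_def ew2 using knz
          by (simp add: field_simps power2_eq_square power3_eq_cube)
        have c3: "w3 - a*1 = b0*k^3 * 1" unfolding a_def by simp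
        show ?thesis unfolding M_def osc_plane_def smul_pt_def using c0 c1 c2 c3 by simp
      qed
      moreover have "b0*k^3 \<noteq> 0" using False knz by simp
      ultimately show False using F2 osc_smul by metis
    qed
  qed
qed



lemma meet_le3:
  fixes c :: "'a::{field,finite} pt"
  assumes "c \<noteq> (0,0,0,0)"
  shows "meet_count c \<le> 3"
proof -
  obtain c0 c1 c2 c3 where c: "c = (c0,c1,c2,c3)" by (cases c) auto
  define p where "p = [:c0,c1,c2,c3:]"
  define R where "R = {t. poly p t = 0}"
  have pev: "pdot c (1,t,t^2,t^3) = poly p t" for t
    unfolding c p_def pdot_def by (simp add: algebra_simps power2_eq_square power3_eq_cube)
  define Im :: "'a pt set" where "Im = (\<lambda>t. (1,t,t^2,t^3)) ` R"
  define Ex :: "'a pt set" where "Ex = (if c3 = 0 then {(0,0,0,1)} else {})"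
  have sub: "{P \<in> twisted_cubic. pdot c P = 0} \<subseteq> Im \<union> Ex"
    unfolding twisted_cubic_def R_def Im_def Ex_def using pev by (auto simp: c pdot_def)
  have "meet_count c \<le> card (Im \<union> Ex)" unfolding meet_count_def
    by (rule card_mono[OF _ sub]) simp
  also have "\<dots> \<le> card Im + card Ex" by (rule card_Un_le)
  also have "\<dots> \<le> card R + (if c3 = 0 then 1 else 0)"
    unfolding Im_def Ex_def by (intro add_mono card_image_le) auto
  also have "\<dots> \<le> 3"
  proof (cases "c3 = 0")
    case True
    have "p = [:c0,c1,c2:]" unfolding p_def using True by simp
    moreover have "[:c0,c1,c2:] \<noteq> 0" using assms True c by auto
    ultimately have "card R \<le> degree [:c0,c1,c2:]" unfolding R_def
      using card_poly_roots_bound by metis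
    moreover have "degree [:c0,c1,c2:] \<le> 2"
    proof -
      have "degree [:c1,c2:] \<le> 1" using degree_pCons_le[of c1 "[:c2:]"] by simp
      thus ?thesis using degree_pCons_le[of c0 "[:c1,c2:]"] by simp
    qed
    ultimately show ?thesis using True by simp
  next
    case False
    have "p \<noteq> 0" unfolding p_def using False by simp
    hence "card R \<le> degree p" unfolding R_def by (rule card_poly_roots_bound)
    moreover have "degree p \<le> 3" unfolding p_def
    proof -
      have "degree [:c2,c3:] \<le> 1" using degree_pCons_le[of c2 "[:c3:]"] by simp
      hence "degree [:c1,c2,c3:] \<le> 2" using degree_pCons_le[of c1 "[:c2,c3:]"] by simp
      thus "degree [:c0,c1,c2,c3:] \<le> 3" using degree_pCons_le[of c0 "[:c1,c2,c3:]"] by simp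
    qed
    ultimately show ?thesis using False by simp
  qed
  finally show ?thesis .
qed



lemma pdot_smul: "pdot (smul_pt l x) y = l * pdot x (y::'a::field pt)"
  by (cases x, cases y) (simp add: pdot_def smul_pt_def algebra_simps)

lemma self_class: "x \<in> proj_class (x::'a::field pt)"
  unfolding proj_class_def by (cases x) (auto simp: smul_pt_def intro!: exI[of _ 1])

theorem mainTheorem9:
  fixes u v :: "'a::{field,finite} pt" and p n :: nat
  assumes "prime p" and "p \<noteq> 2" and "p \<noteq> 3" and "card (UNIV :: 'a set) = p ^ n"
    and "is_line u v"
  shows "\<not> (\<exists>d e. OD2 u v = [1, 0, 0, d, e] \<and> d \<ge> 1)"
proof
  assume "\<exists>d e. OD2 u v = [1, 0, 0, d, e] \<and> d \<ge> 1"
  then obtain d e where od: "OD2 u v = [1, 0, 0, d, e]" and d1: "d \<ge> 1" by blast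
  note ch = char_facts[OF assms(1-4)]
  have ch': "odd (card (UNIV::'a set))" "card (UNIV::'a set) \<ge> 5" "(2::'a) \<noteq> 0" "(3::'a) \<noteq> 0"
    using ch by auto
  let ?L = "planes_through_line u v"
  have cards: "card (?L 1) = 1" "card (?L 2) = 0" "card (?L 3) = 0" "card (?L 4) = d"
    using od by (simp_all add: OD2_def)
  have fin: "finite (?L i)" for i by simp
  have L2: "?L 2 = {}" using cards(2) fin[of 2] by simp
  have L3: "?L 3 = {}" using cards(3) fin[of 3] by simp
  obtain X where X: "?L 1 = {X}" using cards(1) card_1_singletonE by blast
  have "X \<in> ?L 1" using X by simp
  then obtain c1 where c1: "X = proj_class c1" "c1 \<noteq> (0,0,0,0)" "pdot c1 u = 0" "pdot c1 v = 0"
      "plane_class 1 c1"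
    unfolding planes_through_line_def mem_Collect_eq by (elim exE conjE) (rule that)
  have c1osc: "is_osculating c1" using c1(5) unfolding plane_class_def by simp
  have "?L 4 \<noteq> {}"
  proof
    assume "?L 4 = {}"
    hence "card (?L 4) = 0" by (simp only: card.empty)
    thus False using cards(4) d1 by simp
  qed
  then obtain X4 where "X4 \<in> ?L 4" by (meson ex_in_conv)
  then obtain c4 where c4: "X4 = proj_class c4" "c4 \<noteq> (0,0,0,0)" "pdot c4 u = 0" "pdot c4 v = 0"
      "plane_class 4 c4"
    unfolding planes_through_line_def mem_Collect_eq by (elim exE conjE) (rule that)
  have c4osc: "\<not> is_osculating c4" using c4(5) unfolding plane_class_def by simp
  obtain oc :: "'a pt" where ocase: "oc = (1,0,0,0) \<or> (\<exists>t0. oc = osc_plane t0)"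
      and pco: "proj_class c1 = proj_class oc"
  proof -
    from c1osc consider t where "proj_class c1 = proj_class (osc_plane t)"
      | "proj_class c1 = proj_class (1,0,0,0)" unfolding is_osculating_def by (elim disjE exE) auto
    thus ?thesis using that by metis
  qed
  have "c1 \<in> proj_class oc" using self_class[of c1] unfolding pco .
  then obtain lam where lam: "c1 = smul_pt lam oc" "lam \<noteq> 0"
    unfolding proj_class_def mem_Collect_eq by (elim exE conjE) (rule that)
  have ou: "pdot oc u = 0" and ov: "pdot oc v = 0" using c1(3,4) lam by (auto simp: pdot_smul)
  have oscO: "is_osculating (smul_pt k oc)" if "k \<noteq> 0" for k
    using ocase osc_smul[OF that] inf_smul[OF that] by auto
  have notprop: "c4 \<noteq> smul_pt k oc" for k
  proof
    assume h: "c4 = smul_pt k oc"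
    show False
    proof (cases "k = 0")
      case True then show False using h c4(2) by (cases oc) (simp add: smul_pt_def)
    next
      case False then show False using h c4osc oscO by simp
    qed
  qed
  obtain w0 w1 w2 w3 where w: "c4 = (w0,w1,w2,w3)" by (cases c4) auto
  obtain o0 o1 o2 o3 where oo: "oc = (o0,o1,o2,o3)" by (cases oc) auto
  define mem where "mem a = (w0 - a*o0, w1 - a*o1, w2 - a*o2, w3 - a*o3)" for a
  have pmem: "pdot (mem a) x = pdot c4 x - a * pdot oc x" for a x
    unfolding mem_def w oo pdot_def by (cases x) (simp add: algebra_simps)
  have memprop: "c4 = smul_pt (a + m) oc" if "mem a = smul_pt m oc" for a m
    using that unfolding mem_def w oo smul_pt_def by (simp add: algebra_simps)
  have mem_ne: "mem a \<noteq> (0,0,0,0)" for a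
  proof
    assume "mem a = (0,0,0,0)"
    hence "mem a = smul_pt 0 oc" by (simp add: oo smul_pt_def)
    thus False using memprop notprop by blast
  qed
  have F1: False if "P \<noteq> Q" "P \<in> twisted_cubic" "Q \<in> twisted_cubic"
      "pdot (mem a) P = 0" "pdot (mem a) Q = 0" for a P Q
  proof -
    have "{P,Q} \<subseteq> {P \<in> twisted_cubic. pdot (mem a) P = 0}" using that by auto
    hence "card {P,Q} \<le> meet_count (mem a)" unfolding meet_count_def
      by (intro card_mono) auto
    hence "meet_count (mem a) \<ge> 2" using that(1) by simp
    moreover have "meet_count (mem a) \<le> 3" by (rule meet_le3[OF mem_ne])
    ultimately have "plane_class 2 (mem a) \<or> plane_class 3 (mem a)"
      unfolding plane_class_def by auto
    moreover have "pdot (mem a) u = 0" "pdot (mem a) v = 0" using pmem c4 ou ov by auto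
    ultimately have "proj_class (mem a) \<in> ?L 2 \<or> proj_class (mem a) \<in> ?L 3"
      unfolding planes_through_line_def using mem_ne by blast
    thus False using L2 L3 by blast
  qed
  have F2: False if "is_osculating (mem a)" for a
  proof -
    have "pdot (mem a) u = 0" "pdot (mem a) v = 0" using pmem c4 ou ov by auto
    moreover have "plane_class 1 (mem a)" using that unfolding plane_class_def by simp
    ultimately have "proj_class (mem a) \<in> ?L 1"
      unfolding planes_through_line_def using mem_ne by blast
    hence "proj_class (mem a) = proj_class c1" using X c1(1) by simp
    hence "mem a \<in> proj_class c1" using self_class[of "mem a"] by simp
    then obtain l where "l \<noteq> 0" "mem a = smul_pt l c1" unfolding proj_class_def by blast
    hence "mem a = smul_pt (l*lam) oc" using lam(1) by (simp add: smul_smul)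
    thus False using memprop notprop by blast
  qed
  show False
  proof (cases "oc = (1,0,0,0)")
    case True
    hence o': "o0 = 1" "o1 = 0" "o2 = 0" "o3 = 0" using oo by auto
    have me: "mem a = (w0 - a, w1, w2, w3)" for a unfolding mem_def o' by simp
    show False
    proof (rule core_inf[OF ch', of w0 w1 w2 w3])
      fix a P Q assume "P \<noteq> Q" "P \<in> twisted_cubic" "Q \<in> twisted_cubic"
        "pdot (w0 - a, w1, w2, w3) P = 0" "pdot (w0 - a, w1, w2, w3) Q = 0"
      thus False using F1[of P Q a] unfolding me by blast
    next
      fix a assume "is_osculating (w0 - a, w1, w2, w3)"
      thus False using F2[of a] unfolding me by blast
    qed
  next
    case False
    then obtain t0 where "oc = osc_plane t0" using ocase by blast
    hence o': "o0 = - (t0^3)" "o1 = 3*t0^2" "o2 = - (3*t0)" "o3 = 1" using oo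
      by (auto simp: osc_plane_def)
    have me: "mem a = (w0 - a * - (t0^3), w1 - a*(3*t0^2), w2 - a * - (3*t0), w3 - a*1)" for a
      unfolding mem_def o' by simp
    show False
    proof (rule core_osc[OF ch', of mem w0 t0 w1 w2 w3, OF me])
      fix a P Q assume "P \<noteq> Q" "P \<in> twisted_cubic" "Q \<in> twisted_cubic"
        "pdot (mem a) P = 0" "pdot (mem a) Q = 0"
      thus False using F1[of P Q a] by blast
    next
      fix a assume "is_osculating (mem a)"
      thus False using F2[of a] by blast
    qed
  qed
qed

end
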